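(* Let $(t_j^i)_{0\le j\le i}$ be real numbers and let $h_{j,k}^i$ ($0\le k\le i$, $0\le j\le i-k$) be defined by $h_{j,0}^i=t_j^i$ and $h_{j,k}^i=h_{j,k-1}^{i-1}+h_{j,k-1}^{i}+h_{j+1,k-1}^{i}$ for $k\ge 1$. Suppose that there is a constant $c$ with $t_0^i=c$ for all $i\ge 0$, and that Pascal's rule $t^i_{j}=t^{i-1}_{j-1}+t^{i-1}_{j}$ holds for all $i\ge 2$, $1\le j\le i-1$. Fix $j,k\ge 0$ and let $m=j+k+1$. Then the sequence $\{h_{j,k}^{i}\}_{i=j+k}^{\infty}$ satisfies the $m$-th order homogeneous linear recurrence $$\sum_{\ell=0}^{m}(-1)^{\ell}\binom{m}{\ell} h_{j,k}^{i+\ell}=0\qquad\text{for all } i\geq j+k.$$ *)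

theory Defs
  imports Complex_Main
begin

text \<open>The triangular array t is encoded as a function t i j (meaningful for j \<le> i).
  hh t i j k is h^i_{j,k}: h^i_{j,0} = t^i_j and
  h^i_{j,k} = h^{i-1}_{j,k-1} + h^i_{j,k-1} + h^i_{j+1,k-1} for k \<ge> 1.
  It is only meaningful for k \<le> i and j \<le> i - k; on that range the recursion
  only refers to entries in range.\<close>
fun hh :: "(nat \<Rightarrow> nat \<Rightarrow> real) \<Rightarrow> nat \<Rightarrow> nat \<Rightarrow> nat \<Rightarrow> real" where
  "hh t i j 0 = t i j"
| "hh t i j (Suc k) = hh t (i - 1) j k + hh t i j k + hh t i (j + 1) k"

end

theory Submission
  imports Defs
begin

definition SS :: "nat \<Rightarrow> (nat \<Rightarrow> real) \<Rightarrow> nat \<Rightarrow> real" where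
  "SS n f i = (\<Sum>l = 0..n. (-1) ^ l * real (n choose l) * f (i + l))"

lemma SS_rec: "SS (Suc n) f i = SS n f i - SS n f (Suc i)"
proof -
  have 1: "SS (Suc n) f i = f i + (\<Sum>l = 0..n. (-1) ^ Suc l * real (n choose l) * f (i + Suc l))
      + (\<Sum>l = 0..n. (-1) ^ Suc l * real (n choose Suc l) * f (i + Suc l))"
    unfolding SS_def by (subst sum.atLeast0_atMost_Suc_shift) (simp add: sum.distrib[symmetric] algebra_simps)
  have 2: "(\<Sum>l = 0..n. (-1) ^ Suc l * real (n choose l) * f (i + Suc l)) = - SS n f (Suc i)"
    unfolding SS_def by (simp add: sum_negf[symmetric])
  have 3: "f i + (\<Sum>l = 0..n. (-1) ^ Suc l * real (n choose Suc l) * f (i + Suc l))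
      = (\<Sum>l = 0..Suc n. (-1) ^ l * real (n choose l) * f (i + l))"
    by (subst sum.atLeast0_atMost_Suc_shift) simp
  have 4: "(\<Sum>l = 0..Suc n. (-1) ^ l * real (n choose l) * f (i + l)) = SS n f i"
    unfolding SS_def by simp
  show ?thesis using 1 2 3 4 by simp
qed

lemma SS_add: "SS n (\<lambda>i. f i + g i) i = SS n f i + SS n g i"
  unfolding SS_def by (simp add: sum.distrib algebra_simps)

lemma SS_diff: "SS n (\<lambda>i. f i - g i) i = SS n f i - SS n g i"
  unfolding SS_def by (simp add: sum_subtractf algebra_simps)

lemma SS_rec2: "SS (Suc n) f i = - SS n (\<lambda>i. f (Suc i) - f i) i"
proof -
  have "SS n f (Suc i) = SS n (\<lambda>i. f (Suc i)) i" unfolding SS_def by simp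
  then show ?thesis using SS_rec[of n f i] SS_diff[of n "\<lambda>i. f (Suc i)" f i] by simp
qed

lemma SS_local: "(\<And>x. x \<ge> a \<Longrightarrow> f x = g x) \<Longrightarrow> i \<ge> a \<Longrightarrow> SS n f i = SS n g i"
  unfolding SS_def by (intro sum.cong) auto

lemma SS_lift: "(\<And>x. x \<ge> a \<Longrightarrow> SS n f x = 0) \<Longrightarrow> i \<ge> a \<Longrightarrow> SS (Suc n) f i = 0"
  using SS_rec[of n f i] by simp

lemma SS_pred: "i \<ge> 1 \<Longrightarrow> SS n (\<lambda>i. f (i - 1)) i = SS n f (i - 1)"
  unfolding SS_def by (intro sum.cong) auto

lemma t_lemma:
  fixes t :: "nat \<Rightarrow> nat \<Rightarrow> real" and c :: real
  assumes const: "\<And>i. t i 0 = c"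
    and pascal: "\<And>i j. 2 \<le> i \<Longrightarrow> 1 \<le> j \<Longrightarrow> j \<le> i - 1 \<Longrightarrow>
                    t i j = t (i - 1) (j - 1) + t (i - 1) j"
  shows "\<forall>i \<ge> j. SS (Suc j) (\<lambda>i. t i j) i = 0"
proof (induction j)
  case 0
  then show ?case by (simp add: SS_def const)
next
  case (Suc j)
  show ?case
  proof (intro allI impI)
    fix i assume i: "Suc j \<le> i"
    have "SS (Suc j) (\<lambda>i. t (Suc i) (Suc j) - t i (Suc j)) i = SS (Suc j) (\<lambda>i. t i j) i"
    proof (rule SS_local[of "Suc j"])
      fix x assume "Suc j \<le> x"
      then show "t (Suc x) (Suc j) - t x (Suc j) = t x j" using pascal[of "Suc x" "Suc j"] by simp
    qed (use i in auto)
    also have "\<dots> = 0" using Suc i by simp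
    finally show "SS (Suc (Suc j)) (\<lambda>i. t i (Suc j)) i = 0"
      by (subst SS_rec2) simp
  qed
qed

theorem theorem6:
  fixes t :: "nat \<Rightarrow> nat \<Rightarrow> real" and c :: real and j k :: nat
  assumes const: "\<And>i. t i 0 = c"
    and pascal: "\<And>i j. 2 \<le> i \<Longrightarrow> 1 \<le> j \<Longrightarrow> j \<le> i - 1 \<Longrightarrow>
                    t i j = t (i - 1) (j - 1) + t (i - 1) j"
  shows "\<forall>i \<ge> j + k. (\<Sum>l = 0..j + k + 1. (-1) ^ l * real ((j + k + 1) choose l) * hh t (i + l) j k) = 0"
proof -
  have main: "\<forall>i \<ge> j + k. SS (j + k + 1) (\<lambda>i. hh t i j k) i = 0" for k j
  proof (induction k arbitrary: j)
    case 0
    then show ?case using t_lemma[of t c, OF const pascal] by simp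
  next
    case (Suc k)
    show ?case
    proof (intro allI impI)
      fix i assume i: "j + Suc k \<le> i"
      have "SS (j + Suc k + 1) (\<lambda>i. hh t i j (Suc k)) i =
            SS (j + Suc k + 1) (\<lambda>i. (hh t (i - 1) j k + hh t i j k) + hh t i (j + 1) k) i"
        by (rule SS_local[of "j + Suc k"]) (use i in auto)
      also have "\<dots> = SS (j + Suc k + 1) (\<lambda>i. hh t (i - 1) j k) i
           + SS (j + Suc k + 1) (\<lambda>i. hh t i j k) i + SS (j + Suc k + 1) (\<lambda>i. hh t i (j + 1) k) i"
        by (simp only: SS_add)
      also have "SS (j + Suc k + 1) (\<lambda>i. hh t (i - 1) j k) i = SS (j + Suc k + 1) (\<lambda>i. hh t i j k) (i - 1)"
        using i by (intro SS_pred) auto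
      also have "SS (j + Suc k + 1) (\<lambda>i. hh t i j k) (i - 1) = 0"
        using SS_lift[of "j + k" "j + k + 1" "\<lambda>i. hh t i j k" "i - 1"] Suc[of j] i by simp
      also have "SS (j + Suc k + 1) (\<lambda>i. hh t i j k) i = 0"
        using SS_lift[of "j + k" "j + k + 1" "\<lambda>i. hh t i j k" i] Suc[of j] i by simp
      also have "SS (j + Suc k + 1) (\<lambda>i. hh t i (j + 1) k) i = 0"
        using Suc[of "j + 1"] i by simp
      finally show "SS (j + Suc k + 1) (\<lambda>i. hh t i j (Suc k)) i = 0" by simp
    qed
  qed
  show ?thesis using main[of j k] unfolding SS_def by simp
qed

end
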